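(* Let $M$ be a manifold with a Randers metric $Z$ having Zermelo data $(h,W)$, and let $f:U\subset M\to\mathbb{R}$ be a smooth function without critical points on the open set $U$. Let $\nabla f$ and $\widetilde{\nabla} f$ denote the gradients of $f$ with respect to $Z$ and $h$ respectively, and write $\|v\|=\sqrt{h(v,v)}$. Then on $U$: (a) $\dfrac{\|\widetilde{\nabla} f\|}{Z(\nabla f)}\big(\nabla f-Z(\nabla f)W\big)=\widetilde{\nabla} f$; (b) $Z(\nabla f)=\|\widetilde{\nabla} f\|+df(W)$.
   Context: Given a Riemannian metric $h$ on $M$ and a smooth vector field $W$ with $h(W,W)<1$, the Randers metric $Z:TM\to[0,\infty)$ with Zermelo data $(h,W)$ is defined for $v\neq0$ as the solution $Z(v)>0$ of $h\big(\frac{v}{Z(v)}-W,\frac{v}{Z(v)}-W\big)=1$ (and $Z(0)=0$); it is a Finsler metric. For a Finsler metric $F$ with fundamental tensor $g_v(u,w)=\frac12\frac{\partial^2}{\partial t\partial s}F^2(v+tu+sw)|_{t=s=0}$, the gradient $\nabla f$ of $f$ at a non-critical point is the unique vector with $df(\cdot)=g_{\nabla f}(\nabla f,\cdot)$; for a Riemannian metric this is the usual gradient. *)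

theory Defs
  imports "HOL-Analysis.Analysis"
begin

text \<open>We work in a coordinate chart: points of M and tangent vectors are both
  elements of a Euclidean space 'a. A Riemannian metric is a field of
  inner products h p on the tangent spaces.\<close>

definition riemannian_metric :: "'a set \<Rightarrow> ('a \<Rightarrow> 'a::euclidean_space \<Rightarrow> 'a \<Rightarrow> real) \<Rightarrow> bool" where
  "riemannian_metric U h \<longleftrightarrow>
     (\<forall>p\<in>U. bilinear (h p) \<and> (\<forall>u v. h p u v = h p v u) \<and> (\<forall>v. v \<noteq> 0 \<longrightarrow> h p v v > 0))"

definition randers :: "('a \<Rightarrow> 'a::euclidean_space \<Rightarrow> 'a \<Rightarrow> real) \<Rightarrow> ('a \<Rightarrow> 'a) \<Rightarrow> 'a \<Rightarrow> 'a \<Rightarrow> real" where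
  "randers h W p v =
     (if v = 0 then 0
      else (THE z. z > 0 \<and> h p ((1 / z) *\<^sub>R v - W p) ((1 / z) *\<^sub>R v - W p) = 1))"

definition fund_tensor :: "('a::real_vector \<Rightarrow> real) \<Rightarrow> 'a \<Rightarrow> 'a \<Rightarrow> 'a \<Rightarrow> real" where
  "fund_tensor F v u w =
     (1 / 2) * deriv (\<lambda>t. deriv (\<lambda>s. (F (v + t *\<^sub>R u + s *\<^sub>R w))\<^sup>2) 0) 0"

definition finsler_grad :: "('a::real_vector \<Rightarrow> real) \<Rightarrow> ('a \<Rightarrow> real) \<Rightarrow> 'a" where
  "finsler_grad F df = (THE y. \<forall>w. df w = fund_tensor F y y w)"

definition riem_grad :: "('a \<Rightarrow> 'a \<Rightarrow> 'a \<Rightarrow> real) \<Rightarrow> 'a \<Rightarrow> ('a \<Rightarrow> real) \<Rightarrow> 'a" where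
  "riem_grad h p df = (THE y. \<forall>w. df w = h p y w)"

end

theory Submission
  imports Defs
begin

locale rp =
  fixes B :: "'a::euclidean_space \<Rightarrow> 'a \<Rightarrow> real" and W :: 'a
  assumes bl: "bilinear B" and sym: "\<And>u v. B u v = B v u"
    and pd: "\<And>v. v \<noteq> 0 \<Longrightarrow> B v v > 0" and WW: "B W W < 1"
begin

lemma ladd: "B (x + y) z = B x z + B y z" by (rule bilinear_ladd[OF bl])
lemma radd: "B x (y + z) = B x y + B x z" by (rule bilinear_radd[OF bl])
lemma lmul: "B (c *\<^sub>R x) y = c * B x y" using bilinear_lmul[OF bl] by simp
lemma rmul: "B x (c *\<^sub>R y) = c * B x y" using bilinear_rmul[OF bl] by simp
lemma lsub: "B (x - y) z = B x z - B y z" by (rule bilinear_lsub[OF bl])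
lemma rsub: "B x (y - z) = B x y - B x z" by (rule bilinear_rsub[OF bl])
lemma lzero[simp]: "B 0 x = 0" using bilinear_lzero[OF bl] by simp
lemma rzero[simp]: "B x 0 = 0" using bilinear_rzero[OF bl] by simp
lemmas bsimps = ladd radd lmul rmul lsub rsub

lemma pd0: "B v v \<ge> 0" using pd[of v] by (cases "v = 0") auto

lemma eq_zero: "B v v = 0 \<Longrightarrow> v = 0" using pd[of v] by (cases "v = 0") auto

lemma uniq: assumes "\<And>w. B c w = B d w" shows "c = d"
proof -
  have "B (c - d) (c - d) = 0" using assms[of "c - d"] by (simp add: lsub)
  from eq_zero[OF this] show ?thesis by simp
qed

lemma riesz: assumes "linear df" shows "\<exists>c. \<forall>w. df w = B c w"
proof -
  define T where "T y = (\<Sum>b\<in>Basis. B y b *\<^sub>R b)" for y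
  have linT: "linear T"
    unfolding T_def
    by (intro linearI) (simp_all add: ladd lmul scaleR_add_left sum.distrib scaleR_sum_right)
  have Tb: "T y \<bullet> b = B y b" if "b \<in> Basis" for y b
    using that by (simp add: T_def inner_sum_left inner_Basis if_distrib cong: if_cong)
  have expand: "B y w = (\<Sum>b\<in>Basis. (w \<bullet> b) * B y b)" for y w
  proof -
    have "B y w = B y (\<Sum>b\<in>Basis. (w \<bullet> b) *\<^sub>R b)" by (simp add: euclidean_representation)
    also have "\<dots> = (\<Sum>b\<in>Basis. (w \<bullet> b) * B y b)"
      using bl unfolding bilinear_def by (simp add: linear_sum linear_scale)
    finally show ?thesis .
  qed
  have "inj T"
  proof (rule linear_injective_0[OF linT, THEN iffD2], intro allI impI)
    fix y assume "T y = 0"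
    hence "B y b = 0" if "b \<in> Basis" for b using Tb[OF that, of y] by simp
    hence "B y y = 0" using expand[of y y] by simp
    thus "y = 0" by (rule eq_zero)
  qed
  hence "surj T" using linT linear_injective_imp_surjective by blast
  then obtain c where c: "T c = (\<Sum>b\<in>Basis. df b *\<^sub>R b)" by (metis surjD)
  have cb: "B c b = df b" if "b \<in> Basis" for b
    using Tb[OF that, of c] that by (simp add: c inner_sum_left inner_Basis if_distrib cong: if_cong)
  have "df w = B c w" for w
  proof -
    have "df w = df (\<Sum>b\<in>Basis. (w \<bullet> b) *\<^sub>R b)" by (simp add: euclidean_representation)
    also have "\<dots> = (\<Sum>b\<in>Basis. (w \<bullet> b) * df b)" using assms by (simp add: linear_sum linear_scale)
    also have "\<dots> = B c w" using expand[of c w] cb by simp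
    finally show ?thesis .
  qed
  thus ?thesis by blast
qed

definition "lam = 1 - B W W"
definition "Qf x = sqrt ((B x W)^2 + lam * B x x)"
definition "Fx x = (Qf x - B x W) / lam"
definition "Dx x w = ((B x W * B w W + lam * B x w) / Qf x - B w W) / lam"

lemma lam_pos: "lam > 0" using WW by (simp add: lam_def)

lemma Qf_sq: "(Qf x)^2 = (B x W)^2 + lam * B x x"
  unfolding Qf_def using lam_pos pd0[of x] by simp

lemma Qf_gt: "x \<noteq> 0 \<Longrightarrow> Qf x > \<bar>B x W\<bar>"
proof -
  assume "x \<noteq> 0"
  hence "(B x W)^2 < (B x W)^2 + lam * B x x" using pd[of x] lam_pos by simp
  hence "sqrt ((B x W)^2) < Qf x" unfolding Qf_def by (subst real_sqrt_less_iff) simp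
  thus ?thesis by simp
qed

lemma Fx_pos: "x \<noteq> 0 \<Longrightarrow> Fx x > 0"
  using Qf_gt[of x] lam_pos unfolding Fx_def by auto

lemma expand_eq: "B ((1/z) *\<^sub>R x - W) ((1/z) *\<^sub>R x - W) = (1/z)^2 * B x x - 2 * (1/z) * B x W + B W W"
  by (simp add: bsimps sym[of W x] power2_eq_square algebra_simps)

lemma randers_char:
  assumes x: "x \<noteq> 0"
  shows "(z > 0 \<and> B ((1/z) *\<^sub>R x - W) ((1/z) *\<^sub>R x - W) = 1) \<longleftrightarrow> z = Fx x"
proof
  assume h: "z > 0 \<and> B ((1/z) *\<^sub>R x - W) ((1/z) *\<^sub>R x - W) = 1"
  hence z: "z > 0" and e: "(1/z)^2 * B x x - 2 * (1/z) * B x W + B W W = 1" using expand_eq by auto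
  have "z^2 * ((1/z)^2 * B x x - 2 * (1/z) * B x W + B W W) = B x x - 2 * z * B x W + B W W * z^2"
    using z by (simp add: field_simps power2_eq_square)
  hence "B x x - 2 * z * B x W + B W W * z^2 = z^2" using e by simp
  hence e2: "lam * z^2 + 2 * B x W * z = B x x" by (simp add: lam_def algebra_simps)
  have "(lam * z + B x W)^2 = (Qf x)^2"
    unfolding Qf_sq using e2[symmetric] by (simp add: power2_eq_square algebra_simps)
  hence "sqrt ((lam * z + B x W)^2) = sqrt ((Qf x)^2)" by simp
  moreover have "Qf x \<ge> 0" unfolding Qf_def using lam_pos pd0[of x] by simp
  ultimately have "Qf x = \<bar>lam * z + B x W\<bar>" by simp
  moreover have "lam * z + B x W \<ge> 0"
  proof (rule ccontr)
    assume "\<not> ?thesis"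
    hence "Qf x = - lam * z - B x W" using \<open>Qf x = _\<close> by simp
    moreover have "lam * z > 0" using lam_pos z by simp
    ultimately show False using Qf_gt[OF x] by simp
  qed
  ultimately have "Qf x = lam * z + B x W" by simp
  thus "z = Fx x" unfolding Fx_def using lam_pos by (simp add: field_simps)
next
  assume zF: "z = Fx x"
  have z: "z > 0" using Fx_pos[OF x] zF by simp
  have lz: "lam * z = Qf x - B x W" using zF lam_pos unfolding Fx_def by simp
  have lz2: "Qf x = lam * z + B x W" using lz by simp
  have e1: "lam * z^2 + 2 * B x W * z = z * (Qf x + B x W)"
    unfolding lz2 by (simp add: power2_eq_square algebra_simps)
  have "lam * (z * (Qf x + B x W)) = (Qf x - B x W) * (Qf x + B x W)" using lz by (simp add: mult.assoc[symmetric])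
  also have "\<dots> = lam * B x x" using Qf_sq[of x] by (simp add: power2_eq_square algebra_simps)
  finally have "z * (Qf x + B x W) = B x x" using lam_pos by simp
  hence e2: "B x x = lam * z^2 + 2 * B x W * z" using e1 by simp
  have e3: "(1/z)^2 * (lam * z^2 + 2 * B x W * z) = lam + 2 * (1/z) * B x W"
    using z by (simp add: field_simps power2_eq_square)
  have "(1/z)^2 * B x x - 2 * (1/z) * B x W + B W W = 1"
    unfolding e2 e3 by (simp add: lam_def)
  thus "z > 0 \<and> B ((1/z) *\<^sub>R x - W) ((1/z) *\<^sub>R x - W) = 1" using z expand_eq by simp
qed

lemma Fx_zero[simp]: "Fx 0 = 0" by (simp add: Fx_def Qf_def)

lemma randers_eq: assumes "h p = B" "Wf p = W" shows "randers h Wf p = Fx"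
proof
  fix x show "randers h Wf p x = Fx x"
  proof (cases "x = 0")
    case True thus ?thesis by (simp add: randers_def)
  next
    case False
    show ?thesis unfolding randers_def assms using False
      by (simp add: randers_char[OF False])
  qed
qed

lemma Fx_line: "Fx (x + s *\<^sub>R w) =
  (sqrt ((B x W + s * B w W)^2 + lam * (B x x + 2 * s * B x w + s^2 * B w w)) - (B x W + s * B w W)) / lam"
  unfolding Fx_def Qf_def by (simp add: bsimps sym[of w x] power2_eq_square algebra_simps)

lemma DERIV_Fx:
  assumes x: "x \<noteq> 0"
  shows "DERIV (\<lambda>s. (Fx (x + s *\<^sub>R w))^2) 0 :> 2 * Fx x * Dx x w"
proof -
  define a where "a = B x W"
  define b where "b = B w W"
  define P where "P s = (a + s * b)^2 + lam * (B x x + 2 * s * B x w + s^2 * B w w)" for s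
  have P0: "P 0 = (Qf x)^2" unfolding P_def Qf_sq a_def by simp
  have Qp: "Qf x > 0" using Qf_gt[OF x] by linarith
  have sP0: "sqrt (P 0) = Qf x" using P0 Qp by simp
  have dP: "DERIV P 0 :> 2 * a * b + lam * (2 * B x w)"
    unfolding P_def by (rule derivative_eq_intros refl | simp)+
  have dS: "DERIV (\<lambda>s. sqrt (P s)) 0 :> inverse (sqrt (P 0)) / 2 * (2 * a * b + lam * (2 * B x w))"
    by (rule DERIV_chain2[OF DERIV_real_sqrt dP]) (use P0 Qp in simp)
  have dL: "DERIV (\<lambda>s. a + s * b) 0 :> b"
    by (rule derivative_eq_intros refl | simp)+
  have dG: "DERIV (\<lambda>s. (sqrt (P s) - (a + s * b)) / lam) 0 :> (inverse (sqrt (P 0)) / 2 * (2 * a * b + lam * (2 * B x w)) - b) / lam"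
    by (intro DERIV_cdivide DERIV_diff dS dL)
  have "DERIV (\<lambda>s. ((sqrt (P s) - (a + s * b)) / lam)^2) 0 :>
     of_nat 2 * ((inverse (sqrt (P 0)) / 2 * (2 * a * b + lam * (2 * B x w)) - b) / lam * ((sqrt (P 0) - (a + 0 * b)) / lam) ^ (2 - Suc 0))"
    by (rule DERIV_power[OF dG])
  moreover have "(\<lambda>s. (Fx (x + s *\<^sub>R w))^2) = (\<lambda>s. ((sqrt (P s) - (a + s * b)) / lam)^2)"
    by (simp add: Fx_line P_def a_def b_def)
  moreover have "of_nat 2 * ((inverse (sqrt (P 0)) / 2 * (2 * a * b + lam * (2 * B x w)) - b) / lam * ((sqrt (P 0) - (a + 0 * b)) / lam) ^ (2 - Suc 0))
     = 2 * Fx x * Dx x w"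
    unfolding sP0 using Qp lam_pos by (simp add: Fx_def Dx_def a_def b_def field_simps)
  ultimately show ?thesis by simp
qed

lemma Qf_scale: assumes "c \<ge> 0" shows "Qf (c *\<^sub>R x) = c * Qf x"
proof -
  have "(B (c *\<^sub>R x) W)^2 + lam * B (c *\<^sub>R x) (c *\<^sub>R x) = c^2 * ((B x W)^2 + lam * B x x)"
    by (simp add: lmul rmul power2_eq_square algebra_simps)
  thus ?thesis unfolding Qf_def using assms by (simp add: real_sqrt_mult)
qed

lemma Fx_scale: "c \<ge> 0 \<Longrightarrow> Fx (c *\<^sub>R x) = c * Fx x"
  unfolding Fx_def by (simp add: Qf_scale lmul algebra_simps diff_divide_distrib)

lemma Dx_scale: assumes "c > 0" shows "Dx (c *\<^sub>R x) w = Dx x w"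
proof -
  have "B (c *\<^sub>R x) W * B w W + lam * B (c *\<^sub>R x) w = c * (B x W * B w W + lam * B x w)"
    by (simp add: lmul algebra_simps)
  thus ?thesis unfolding Dx_def using assms by (simp add: Qf_scale)
qed

lemma fund_Fx:
  assumes y: "y \<noteq> 0"
  shows "fund_tensor Fx y y w = Fx y * Dx y w"
proof -
  define K where "K = Fx y * Dx y w"
  have inner: "deriv (\<lambda>s. (Fx (y + t *\<^sub>R y + s *\<^sub>R w))^2) 0 = 2 * (1 + t) * K" if t: "t \<in> {-1<..}" for t
  proof -
    have e: "y + t *\<^sub>R y = (1 + t) *\<^sub>R y" by (simp add: algebra_simps)
    have "(1 + t) *\<^sub>R y \<noteq> 0" using t y by auto
    from DERIV_imp_deriv[OF DERIV_Fx[OF this, of w]]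
    have "deriv (\<lambda>s. (Fx ((1 + t) *\<^sub>R y + s *\<^sub>R w))^2) 0 = 2 * Fx ((1 + t) *\<^sub>R y) * Dx ((1 + t) *\<^sub>R y) w" .
    thus ?thesis using t unfolding e K_def by (simp add: Fx_scale Dx_scale)
  qed
  have ev: "eventually (\<lambda>t. t \<in> {-1<..}) (nhds (0::real))"
    by (rule eventually_nhds_in_open) auto
  have "deriv (\<lambda>t. deriv (\<lambda>s. (Fx (y + t *\<^sub>R y + s *\<^sub>R w))^2) 0) 0 = deriv (\<lambda>t. 2 * (1 + t) * K) 0"
    by (rule deriv_cong_ev) (use ev inner in \<open>auto elim: eventually_mono\<close>)
  also have "\<dots> = 2 * K"
    by (rule DERIV_imp_deriv) (rule derivative_eq_intros refl | simp)+
  finally show ?thesis unfolding fund_tensor_def K_def by simp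
qed

lemma fund_zero: "fund_tensor F 0 0 w = 0"
  unfolding fund_tensor_def by (simp add: DERIV_imp_deriv[OF DERIV_const])

lemma Dx_alt: assumes "y \<noteq> 0" shows "Dx y w = (B y w - Fx y * B w W) / Qf y"
proof -
  have Q: "Qf y > 0" using Qf_gt[OF assms] by linarith
  have QF: "Qf y = lam * Fx y + B y W" using lam_pos unfolding Fx_def by simp
  show ?thesis using Q lam_pos unfolding Dx_def
    by (simp add: field_simps) (simp add: QF algebra_simps)
qed

lemma fund_formula: assumes "y \<noteq> 0"
  shows "fund_tensor Fx y y w = B ((Fx y / Qf y) *\<^sub>R (y - Fx y *\<^sub>R W)) w"
  unfolding fund_Fx[OF assms] Dx_alt[OF assms] by (simp add: lmul lsub sym[of W w])

lemma main_loc: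
  assumes nz: "df \<noteq> (\<lambda>v. 0)" and Gt: "\<And>w. df w = B Gt w"
  defines "N \<equiv> sqrt (B Gt Gt)"
  defines "F0 \<equiv> N + B Gt W"
  defines "y0 \<equiv> F0 *\<^sub>R (W + (1 / N) *\<^sub>R Gt)"
  shows "finsler_grad Fx df = y0" and "Fx y0 = F0" and "N > 0" and "F0 > 0"
proof -
  have Gt0: "Gt \<noteq> 0" using nz Gt by auto
  have Np: "N > 0" unfolding N_def using pd[OF Gt0] by simp
  have NN: "N * N = B Gt Gt" unfolding N_def using pd0[of Gt] by simp
  define n where "n = (1 / N) *\<^sub>R Gt"
  have Gtn: "Gt = N *\<^sub>R n" unfolding n_def using Np by simp
  have nn: "B n n = 1" unfolding n_def using Np NN[symmetric] by (simp add: lmul rmul)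
  define k where "k = B n W"
  have "0 \<le> B (n + W) (n + W)" by (rule pd0)
  also have "\<dots> = 1 + 2 * k + B W W" by (simp add: ladd radd nn k_def sym[of W n])
  finally have k: "k > -1" using WW by simp
  have F0k: "F0 = N * (1 + k)" unfolding F0_def k_def Gtn by (simp add: lmul algebra_simps)
  have F0p: "F0 > 0" unfolding F0k using Np k by simp
  have y0n: "y0 = F0 *\<^sub>R (W + n)" unfolding y0_def n_def ..
  have y0nz: "y0 \<noteq> 0"
  proof
    assume "y0 = 0"
    hence "n = - W" using F0p unfolding y0n by (simp add: eq_neg_iff_add_eq_0 add.commute)
    thus False using nn WW by (simp add: bilinear_lneg[OF bl] bilinear_rneg[OF bl])
  qed
  have "(1 / F0) *\<^sub>R y0 - W = n" unfolding y0n using F0p by simp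
  hence FF0: "Fx y0 = F0" using randers_char[OF y0nz, of F0] F0p nn by simp
  thus "Fx y0 = F0" .
  show "N > 0" by fact
  show "F0 > 0" by fact
  have Q0: "Qf y0 = F0 * (1 + k)"
  proof -
    have "Qf y0 = lam * Fx y0 + B y0 W" using lam_pos unfolding Fx_def by simp
    also have "\<dots> = lam * F0 + B y0 W" by (simp add: FF0)
    also have "\<dots> = F0 * (lam + B W W + k)" unfolding y0n k_def by (simp add: lmul ladd algebra_simps)
    finally show ?thesis by (simp add: lam_def)
  qed
  have fund0: "fund_tensor Fx y0 y0 w = df w" for w
  proof -
    have "y0 - F0 *\<^sub>R W = F0 *\<^sub>R n" unfolding y0n by (simp add: algebra_simps)
    hence "fund_tensor Fx y0 y0 w = B ((F0 / (F0 * (1 + k))) *\<^sub>R (F0 *\<^sub>R n)) w"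
      unfolding fund_formula[OF y0nz] FF0 Q0 by simp
    also have "\<dots> = B Gt w" unfolding Gtn F0k using Np k by (simp add: lmul)
    finally show ?thesis using Gt by simp
  qed
  show "finsler_grad Fx df = y0"
    unfolding finsler_grad_def
  proof (rule the_equality)
    show "\<forall>w. df w = fund_tensor Fx y0 y0 w" using fund0 by simp
  next
    fix y assume hy: "\<forall>w. df w = fund_tensor Fx y y w"
    have ynz: "y \<noteq> 0"
    proof
      assume "y = 0"
      hence "df = (\<lambda>v. 0)" using hy fund_zero[of Fx] by (simp add: fun_eq_iff)
      thus False using nz by simp
    qed
    define F where "F = Fx y"
    define Q where "Q = Qf y"
    have Fp: "F > 0" unfolding F_def by (rule Fx_pos[OF ynz])
    have Qp: "Q > 0" unfolding Q_def using Qf_gt[OF ynz] by linarith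
    define u where "u = (1 / F) *\<^sub>R y - W"
    have uu: "B u u = 1" using randers_char[OF ynz, of F] Fp unfolding u_def F_def by simp
    have yu: "y = F *\<^sub>R (W + u)" unfolding u_def using Fp by (simp add: algebra_simps)
    define m where "m = F * F / Q"
    have mp: "m > 0" unfolding m_def using Fp Qp by simp
    have "B Gt w = B (m *\<^sub>R u) w" for w
    proof -
      have "y - F *\<^sub>R W = F *\<^sub>R u" unfolding yu by (simp add: algebra_simps)
      hence "B Gt w = B ((F / Q) *\<^sub>R (F *\<^sub>R u)) w" using hy Gt fund_formula[OF ynz, of w]
        unfolding F_def Q_def by simp
      thus ?thesis unfolding m_def by (simp add: lmul)
    qed
    hence Gtu: "Gt = m *\<^sub>R u" by (rule uniq)
    have "B Gt Gt = m * m" unfolding Gtu by (simp add: lmul rmul uu)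
    hence Nm: "N = m" unfolding N_def using mp by (simp add: real_sqrt_mult)
    have un: "u = n" unfolding n_def Gtu Nm using mp by simp
    have "Q = lam * F + B y W" using lam_pos unfolding Q_def F_def Fx_def by simp
    also have "\<dots> = F * (lam + B W W + k)" unfolding yu un k_def by (simp add: lmul ladd algebra_simps)
    finally have Qk: "Q = F * (1 + k)" by (simp add: lam_def)
    have "N = F / (1 + k)" unfolding Nm m_def Qk using Fp k by simp
    hence "F = F0" unfolding F0k using k by (simp add: field_simps)
    thus "y = y0" unfolding yu y0n un by simp
  qed
qed

end

theorem lemma3p1:
  fixes U :: "'a::euclidean_space set"
    and h :: "'a \<Rightarrow> 'a \<Rightarrow> 'a \<Rightarrow> real"
    and W :: "'a \<Rightarrow> 'a"
    and f :: "'a \<Rightarrow> real"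
    and df :: "'a \<Rightarrow> 'a \<Rightarrow> real"
  assumes "open U"
    and "riemannian_metric U h"
    and "\<forall>p\<in>U. h p (W p) (W p) < 1"
    and "\<forall>p\<in>U. (f has_derivative df p) (at p)"
    and "\<forall>p\<in>U. df p \<noteq> (\<lambda>v. 0)"
  shows "\<forall>p\<in>U.
     (let G = finsler_grad (randers h W p) (df p);
          Gt = riem_grad h p (df p);
          Zp = randers h W p
      in (sqrt (h p Gt Gt) / Zp G) *\<^sub>R (G - Zp G *\<^sub>R W p) = Gt
         \<and> Zp G = sqrt (h p Gt Gt) + df p (W p))"
proof
  fix p assume p: "p \<in> U"
  interpret r: rp "h p" "W p"
    using assms(2,3) p unfolding riemannian_metric_def by unfold_locales auto
  have lin: "linear (df p)" using assms(4) p has_derivative_linear by blast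
  obtain Gt where Gt: "\<forall>w. df p w = h p Gt w" using r.riesz[OF lin] by blast
  have rg: "riem_grad h p (df p) = Gt"
    unfolding riem_grad_def
  proof (rule the_equality)
    show "\<forall>w. df p w = h p Gt w" by fact
    fix y assume "\<forall>w. df p w = h p y w"
    thus "y = Gt" using Gt by (intro r.uniq) simp
  qed
  have ra: "randers h W p = r.Fx" by (rule r.randers_eq) auto
  have nz: "df p \<noteq> (\<lambda>v. 0)" using assms(5) p by blast
  define N where "N = sqrt (h p Gt Gt)"
  define F0 where "F0 = N + h p Gt (W p)"
  define y0 where "y0 = F0 *\<^sub>R (W p + (1 / N) *\<^sub>R Gt)"
  have m1: "finsler_grad r.Fx (df p) = y0" and m2: "r.Fx y0 = F0" and Np: "N > 0" and F0p': "F0 > 0"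
    using r.main_loc[OF nz, of Gt] Gt unfolding N_def F0_def y0_def by auto
  have F0p: "F0 \<noteq> 0" using F0p' by simp
  have a: "(N / F0) *\<^sub>R (y0 - F0 *\<^sub>R W p) = Gt"
    unfolding y0_def using F0p Np by (simp add: algebra_simps)
  have b: "F0 = N + df p (W p)" unfolding F0_def using Gt by simp
  show "let G = finsler_grad (randers h W p) (df p);
          Gt = riem_grad h p (df p);
          Zp = randers h W p
      in (sqrt (h p Gt Gt) / Zp G) *\<^sub>R (G - Zp G *\<^sub>R W p) = Gt
         \<and> Zp G = sqrt (h p Gt Gt) + df p (W p)"
    unfolding Let_def rg ra m1 m2 N_def[symmetric] using a b by simp
qed

end
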